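(* Let $V$ be a finite-dimensional real vector space and $\mathcal{S}=\{x_i\}_{1\le i\le n}$ a finite set of elements of $V$, labeled by integers $\{y_i\}_{1\le i\le n}\subset\{1,\dots,K\}$ with $K\le n$. For $k\in\{1,\dots,K\}$ let $C_k=\{x_i\in\mathcal{S}: y_i=k\}$, and let $S_k$ be a non-empty subset of $C_k$ with cardinality $|S_k|$. Let $W$ be a finite-dimensional real vector space with a fixed basis and $\mathcal{L}:V\to W$ a linear map. Let $A_{\mathcal{L}(S_k)}\in\mathbb{R}^{(1+\dim W)\times|S_k|}$ be the matrix whose columns are, for each element $s\in S_k$, the coordinate vector of $\mathcal{L}(s)$ with an additional entry $1$ appended at the bottom. If for every $x\in\mathcal{S}\setminus C_k$ the linear system $$A_{\mathcal{L}(S_k)}w=\begin{pmatrix}\mathcal{L}(x)\\1\end{pmatrix}$$ has no nonnegative solution $w\in\mathbb{R}_+^{|S_k|}$, then $S_k$ is pure in $\mathcal{S}$.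
   Context: The convex hull $\mathcal{E}(A)$ of a non-empty set $A\subset V$ is the smallest convex set containing $A$, equivalently the set of all convex combinations of finite subsets of $A$. Each $x_i\in\mathcal{S}$ carries the label $y_i$, written $\mathcal{K}(x_i)=y_i$. A non-empty subset $\mathcal{S}_{\mathcal{I}}\subset\mathcal{S}$ is called pure in $\mathcal{S}$ if $\mathcal{K}(\mathcal{S}\cap\mathcal{E}(\mathcal{S}_{\mathcal{I}}))$ is a singleton, i.e. all points of $\mathcal{S}$ lying in the convex hull of $\mathcal{S}_{\mathcal{I}}$ have the same label. *)

theory Defs
  imports "HOL-Analysis.Analysis"
begin

definition pure_in :: "('a::real_vector \<Rightarrow> nat) \<Rightarrow> 'a set \<Rightarrow> 'a set \<Rightarrow> bool" where
  "pure_in lab S A \<longleftrightarrow> A \<noteq> {} \<and> A \<subseteq> S \<and> (\<exists>c. lab ` (S \<inter> convex hull A) = {c})"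

text \<open>The augmented linear system  A_{L(Sk)} w = (L x ; 1), written row by row:
  the columns of A_{L(Sk)} are indexed by s in Sk and consist of the coordinates
  of L s with respect to the fixed basis (Basis) of W, followed by an entry 1.\<close>
definition aug_system :: "('a \<Rightarrow> 'b::euclidean_space) \<Rightarrow> 'a set \<Rightarrow> ('a \<Rightarrow> real) \<Rightarrow> 'a \<Rightarrow> bool" where
  "aug_system L Sk w x \<longleftrightarrow>
     (\<forall>b\<in>Basis. (\<Sum>s\<in>Sk. (L s \<bullet> b) * w s) = L x \<bullet> b) \<and> (\<Sum>s\<in>Sk. 1 * w s) = 1"

end

theory Submission
  imports Defs
begin

theorem corollary1:
  fixes S :: "'a::euclidean_space set"
    and lab :: "'a \<Rightarrow> nat"
    and K k :: nat
    and Sk :: "'a set"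
    and L :: "'a \<Rightarrow> 'b::euclidean_space"
  assumes "finite S"
    and "\<forall>x\<in>S. lab x \<in> {1..K}"
    and "K \<le> card S"
    and "k \<in> {1..K}"
    and "Sk \<noteq> {}"
    and "Sk \<subseteq> {x\<in>S. lab x = k}"
    and "linear L"
    and "\<forall>x\<in>S - {x\<in>S. lab x = k}. \<not> (\<exists>w. (\<forall>s\<in>Sk. w s \<ge> 0) \<and> aug_system L Sk w x)"
  shows "pure_in lab S Sk"
proof -
  have sub: "Sk \<subseteq> S" using assms(6) by auto
  have fin: "finite Sk" using sub assms(1) by (rule finite_subset)
  have key: "lab x = k" if x: "x \<in> S" "x \<in> convex hull Sk" for x
  proof (rule ccontr)
    assume ne: "lab x \<noteq> k"
    from x(2) obtain u where u: "\<forall>s\<in>Sk. 0 \<le> u s" "sum u Sk = 1" "(\<Sum>s\<in>Sk. u s *\<^sub>R s) = x"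
    proof -
      have "x \<in> {y. \<exists>u. (\<forall>x\<in>Sk. 0 \<le> u x) \<and> sum u Sk = 1 \<and> sum (\<lambda>x. u x *\<^sub>R x) Sk = y}"
        using x(2) unfolding convex_hull_finite[OF fin] .
      then show ?thesis using that by blast
    qed
    have "L x = L (\<Sum>s\<in>Sk. u s *\<^sub>R s)" using u(3) by simp
    also have "\<dots> = (\<Sum>s\<in>Sk. L (u s *\<^sub>R s))"
      by (simp add: linear_sum[OF assms(7)] o_def)
    also have "\<dots> = (\<Sum>s\<in>Sk. u s *\<^sub>R L s)"
      using linear_scale[OF assms(7)] by simp
    finally have Lx: "L x = (\<Sum>s\<in>Sk. u s *\<^sub>R L s)" .
    have "aug_system L Sk u x"
      unfolding aug_system_def
    proof (intro conjI ballI)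
      fix b :: 'b assume "b \<in> Basis"
      show "(\<Sum>s\<in>Sk. (L s \<bullet> b) * u s) = L x \<bullet> b"
        unfolding Lx inner_sum_left by (simp add: mult.commute)
    next
      show "(\<Sum>s\<in>Sk. 1 * u s) = 1" using u(2) by simp
    qed
    moreover have "x \<in> S - {x\<in>S. lab x = k}" using x(1) ne by simp
    ultimately show False using assms(8) u(1) by meson
  qed
  obtain s where s: "s \<in> Sk" using assms(5) by blast
  have sS: "s \<in> S" and ls: "lab s = k" using s assms(6) by auto
  have sH: "s \<in> convex hull Sk" using s by (rule hull_inc)
  have img: "lab ` (S \<inter> convex hull Sk) = {k}"
  proof (rule equalityI)
    show "lab ` (S \<inter> convex hull Sk) \<subseteq> {k}"
    proof (rule subsetI)
      fix y assume "y \<in> lab ` (S \<inter> convex hull Sk)"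
      then obtain x where "x \<in> S" "x \<in> convex hull Sk" "y = lab x" by (auto simp only: image_iff Int_iff)
      then show "y \<in> {k}" using key by simp
    qed
    have "lab s \<in> lab ` (S \<inter> convex hull Sk)" using sS sH by (intro imageI IntI)
    then show "{k} \<subseteq> lab ` (S \<inter> convex hull Sk)" using ls by simp
  qed
  show ?thesis unfolding pure_in_def using assms(5) sub img by (intro conjI exI)
qed

end
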